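(* In the setting below, if for some numbers $q_1,\dots,q_I$ one has $N_i^k/N^k\to q_i$ as $k\to\infty$ for every $1\le i\le I$, then $\nu_i^n/n\to q_i$ as $n\to\infty$ for every $1\le i\le I$. In particular, if the $N_i^k$ are random and $N_i^k/N^k\to q_i^*$ almost surely for all $i$, then $\nu_i^n/n\to q_i^*$ almost surely for all $i$.
   Context: Let $I\ge1$, let $0=N^0<N^1<N^2<\cdots$ be integers, and let $N_i^k$ ($1\le i\le I$, $k\ge0$) be nonnegative integers with $N_i^0=0$, $N_i^k\ge N_i^{k-1}$ and $\sum_{i=1}^IN_i^k=N^k$ for all $k$. For $k\ge1$ put $r_i^k=\frac{N_i^k-N_i^{k-1}}{N^k-N^{k-1}}$. Define integers $\nu_i^n$ ($n\ge0$) recursively: $\nu_i^0=0$ for all $i$; for $n\ge1$, with $k$ the unique integer such that $N^{k-1}<n\le N^k$, let $i_n$ be an index maximizing $r_i^k-\frac{\nu_i^{n-1}-N_i^{k-1}}{n-N^{k-1}}$ over $1\le i\le I$ (ties broken by choosing the largest $r_i^k$, and if still tied the largest $i$), and set $\nu_{i_n}^n=\nu_{i_n}^{n-1}+1$, $\nu_i^n=\nu_i^{n-1}$ for $i\ne i_n$. *)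

theory Defs
  imports Complex_Main
begin

definition blk :: "(nat \<Rightarrow> nat) \<Rightarrow> nat \<Rightarrow> nat" where
  "blk N n = (THE k. 1 \<le> k \<and> N (k - 1) < n \<and> n \<le> N k)"

definition rr :: "(nat \<Rightarrow> nat) \<Rightarrow> (nat \<Rightarrow> nat \<Rightarrow> nat) \<Rightarrow> nat \<Rightarrow> nat \<Rightarrow> real" where
  "rr N Ni i k = (real (Ni i k) - real (Ni i (k - 1))) / (real (N k) - real (N (k - 1)))"

definition pick :: "(nat \<Rightarrow> real) \<Rightarrow> (nat \<Rightarrow> real) \<Rightarrow> nat \<Rightarrow> nat" where
  "pick S R I = (THE i. i \<in> {1..I} \<and>
     (\<forall>j\<in>{1..I}. S j < S i \<or> (S j = S i \<and> (R j < R i \<or> (R j = R i \<and> j \<le> i)))))"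

primrec nu :: "(nat \<Rightarrow> nat) \<Rightarrow> (nat \<Rightarrow> nat \<Rightarrow> nat) \<Rightarrow> nat \<Rightarrow> nat \<Rightarrow> nat \<Rightarrow> nat" where
  "nu N Ni I 0 = (\<lambda>i. 0)"
| "nu N Ni I (Suc n) =
     (let k = blk N (Suc n);
          prev = nu N Ni I n;
          S = (\<lambda>i. rr N Ni i k - (real (prev i) - real (Ni i (k - 1))) / (real (Suc n) - real (N (k - 1))));
          j = pick S (\<lambda>i. rr N Ni i k) I
      in prev(j := prev j + 1))"

end

theory Submission
  imports Defs "HOL-Library.Product_Lexorder"
begin

lemma pick_prop:
  assumes "I \<ge> 1"
  shows "pick S R I \<in> {1..I} \<and> (\<forall>j\<in>{1..I}. S j \<le> S (pick S R I))"
proof -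
  define f where "f = (\<lambda>i::nat. (S i, R i, i))"
  have fin: "finite (f ` {1..I})" and ne: "f ` {1..I} \<noteq> {}" using assms by auto
  have "Max (f ` {1..I}) \<in> f ` {1..I}" using Max_in[OF fin ne] .
  then obtain i where i: "i \<in> {1..I}" "f i = Max (f ` {1..I})" by auto
  have le: "\<And>j. j \<in> {1..I} \<Longrightarrow> f j \<le> f i" using i fin by auto
  have P: "S j < S i \<or> (S j = S i \<and> (R j < R i \<or> (R j = R i \<and> j \<le> i)))" if "j \<in> {1..I}" for j
    using le[OF that] unfolding f_def by (auto simp: less_eq_prod_simp)
  have "pick S R I = i"
    unfolding pick_def
  proof (rule the_equality)
    show "i \<in> {1..I} \<and> (\<forall>j\<in>{1..I}. S j < S i \<or> (S j = S i \<and> (R j < R i \<or> (R j = R i \<and> j \<le> i))))"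
      using i P by blast
  next
    fix i' assume h: "i' \<in> {1..I} \<and> (\<forall>j\<in>{1..I}. S j < S i' \<or> (S j = S i' \<and> (R j < R i' \<or> (R j = R i' \<and> j \<le> i'))))"
    then have "S i < S i' \<or> (S i = S i' \<and> (R i < R i' \<or> (R i = R i' \<and> i \<le> i')))" using i by blast
    moreover have "S i' < S i \<or> (S i' = S i \<and> (R i' < R i \<or> (R i' = R i \<and> i' \<le> i)))" using P h by blast
    ultimately show "i' = i" by auto
  qed
  then show ?thesis using i P by force
qed

context
  fixes I :: nat and N :: "nat \<Rightarrow> nat" and Ni :: "nat \<Rightarrow> nat \<Rightarrow> nat"
  assumes I1: "I \<ge> 1" and N0: "N 0 = 0" and smN: "strict_mono N"
    and Ni0: "\<And>i. i \<in> {1..I} \<Longrightarrow> Ni i 0 = 0"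
    and mon: "\<And>i k. i \<in> {1..I} \<Longrightarrow> k \<ge> 1 \<Longrightarrow> Ni i k \<ge> Ni i (k - 1)"
    and sumN: "\<And>k. (\<Sum>i\<in>{1..I}. Ni i k) = N k"
begin

lemma nu_Suc_eq: "nu N Ni I (Suc n) i = nu N Ni I n i + (if i = (let k = blk N (Suc n);
          prev = nu N Ni I n;
          S = (\<lambda>i. rr N Ni i k - (real (prev i) - real (Ni i (k - 1))) / (real (Suc n) - real (N (k - 1))))
      in pick S (\<lambda>i. rr N Ni i k) I) then 1 else 0)"
  by (simp add: Let_def)

lemma sum_nu: "(\<Sum>i\<in>{1..I}. nu N Ni I n i) = n"
proof (induction n)
  case 0 then show ?case by simp
next
  case (Suc n)
  define j where "j = (let k = blk N (Suc n);
          prev = nu N Ni I n;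
          S = (\<lambda>i. rr N Ni i k - (real (prev i) - real (Ni i (k - 1))) / (real (Suc n) - real (N (k - 1))))
      in pick S (\<lambda>i. rr N Ni i k) I)"
  have j: "j \<in> {1..I}" unfolding j_def Let_def using pick_prop[OF I1] by blast
  have "(\<Sum>i\<in>{1..I}. nu N Ni I (Suc n) i) = (\<Sum>i\<in>{1..I}. nu N Ni I n i + (if i = j then 1 else 0))"
    by (rule sum.cong) (simp_all add: nu_Suc_eq j_def del: nu.simps)
  also have "\<dots> = n + 1" using j Suc by (simp add: sum.distrib)
  finally show ?case by simp
qed

lemma blk_eq: "1 \<le> k \<Longrightarrow> N (k - 1) < n \<Longrightarrow> n \<le> N k \<Longrightarrow> blk N n = k"
  unfolding blk_def
proof (rule the_equality)
  fix k' assume a: "1 \<le> k" "N (k - 1) < n" "n \<le> N k" and b: "1 \<le> k' \<and> N (k' - 1) < n \<and> n \<le> N k'"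
  show "k' = k"
  proof (rule ccontr)
    assume "k' \<noteq> k"
    then have "k' < k \<or> k < k'" by arith
    then show False
    proof
      assume "k' < k" then have "k' \<le> k - 1" by arith
      then have "N k' \<le> N (k - 1)" using smN by (simp add: strict_mono_less_eq)
      then show False using a b by arith
    next
      assume "k < k'" then have "k \<le> k' - 1" by arith
      then have "N k \<le> N (k' - 1)" using smN by (simp add: strict_mono_less_eq)
      then show False using a b by arith
    qed
  qed
qed auto

lemma blk_ex: "n \<ge> 1 \<Longrightarrow> \<exists>k\<ge>1. N (k - 1) < n \<and> n \<le> N k"
proof -
  assume n: "n \<ge> 1"
  have "n \<le> N n" using smN strict_mono_imp_increasing by blast
  define k where "k = (LEAST k. n \<le> N k)"
  have k1: "n \<le> N k" unfolding k_def by (rule LeastI[of _ n]) fact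
  have "k \<noteq> 0"
  proof
    assume "k = 0" with k1 n N0 show False by simp
  qed
  moreover have "\<not> n \<le> N (k - 1)" using \<open>k \<noteq> 0\<close> unfolding k_def
    by (metis k_def diff_less not_less_Least zero_less_iff_neq_zero less_one)
  ultimately show ?thesis using k1 by (intro exI[of _ k]) auto
qed

lemma N_pos_diff: "k \<ge> 1 \<Longrightarrow> real (N k) - real (N (k - 1)) > 0"
  using smN by (simp add: strict_mono_def)

lemma rr_nonneg: "i \<in> {1..I} \<Longrightarrow> k \<ge> 1 \<Longrightarrow> rr N Ni i k \<ge> 0"
  unfolding rr_def using mon[of i k] N_pos_diff[of k] by (auto intro!: divide_nonneg_pos)

lemma rr_sum: "k \<ge> 1 \<Longrightarrow> (\<Sum>i\<in>{1..I}. rr N Ni i k) = 1"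
proof -
  assume k: "k \<ge> 1"
  have "(\<Sum>i\<in>{1..I}. rr N Ni i k) = (\<Sum>i\<in>{1..I}. real (Ni i k) - real (Ni i (k - 1))) / (real (N k) - real (N (k - 1)))"
    unfolding rr_def by (simp add: sum_divide_distrib)
  also have "(\<Sum>i\<in>{1..I}. real (Ni i k) - real (Ni i (k - 1))) = real (N k) - real (N (k - 1))"
    by (simp add: sum_subtractf flip: sumN)
  finally show ?thesis using N_pos_diff[OF k] by simp
qed

lemma block:
  assumes k: "k \<ge> 1" and start: "\<forall>i\<in>{1..I}. nu N Ni I (N (k - 1)) i = Ni i (k - 1)"
  shows "m \<le> N k - N (k - 1) \<Longrightarrow> \<forall>i\<in>{1..I}. real (nu N Ni I (N (k - 1) + m) i) - real (Ni i (k - 1)) - rr N Ni i k * real m < 1"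
proof (induction m)
  case 0 then show ?case using start by simp
next
  case (Suc m)
  define n where "n = N (k - 1) + m"
  have IH: "\<forall>i\<in>{1..I}. real (nu N Ni I n i) - real (Ni i (k - 1)) - rr N Ni i k * real m < 1"
    using Suc n_def by simp
  have blk: "blk N (Suc n) = k" using Suc.prems k n_def by (intro blk_eq) auto
  define prev where "prev = nu N Ni I n"
  define S where "S = (\<lambda>i. rr N Ni i k - (real (prev i) - real (Ni i (k - 1))) / (real (Suc n) - real (N (k - 1))))"
  define j where "j = pick S (\<lambda>i. rr N Ni i k) I"
  have nuS: "nu N Ni I (Suc n) = prev(j := prev j + 1)"
    by (simp add: Let_def blk prev_def S_def j_def)
  have den: "real (Suc n) - real (N (k - 1)) = real (Suc m)" using n_def by simp
  define D where "D = (\<lambda>i. rr N Ni i k * real (Suc m) - (real (prev i) - real (Ni i (k - 1))))"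
  have SD: "S i = D i / real (Suc m)" for i unfolding S_def D_def den by (simp add: field_simps)
  have j: "j \<in> {1..I}" and jmax: "\<forall>i\<in>{1..I}. S i \<le> S j" using pick_prop[OF I1, of S "\<lambda>i. rr N Ni i k"] j_def by auto
  have Dle: "D i \<le> D j" if "i \<in> {1..I}" for i
    using jmax that unfolding SD by (simp add: divide_le_cancel)
  have sprev: "(\<Sum>i\<in>{1..I}. real (prev i)) = real n" unfolding prev_def
    by (metis of_nat_sum sum_nu)
  have sNi: "(\<Sum>i\<in>{1..I}. real (Ni i (k - 1))) = real (N (k - 1))"
    by (metis of_nat_sum sumN)
  have "(\<Sum>i\<in>{1..I}. D i) = real (Suc m) * (\<Sum>i\<in>{1..I}. rr N Ni i k) - ((\<Sum>i\<in>{1..I}. real (prev i)) - (\<Sum>i\<in>{1..I}. real (Ni i (k - 1))))"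
    unfolding D_def by (simp add: sum_subtractf sum_distrib_left mult.commute)
  also have "\<dots> = 1" using rr_sum[OF k] sprev sNi n_def by simp
  finally have sD: "(\<Sum>i\<in>{1..I}. D i) = 1" .
  have "(\<Sum>i\<in>{1..I}. D i) \<le> of_nat (card {1..I}) * D j" by (rule sum_bounded_above) (rule Dle)
  then have "1 \<le> real I * D j" using sD by simp
  then have Dj: "D j > 0" using I1
    by (metis mult_le_0_iff not_le of_nat_0_le_iff order_trans zero_less_one not_one_le_zero)
  show ?case
  proof
    fix i assume i: "i \<in> {1..I}"
    have e: "N (k - 1) + Suc m = Suc n" using n_def by simp
    show "real (nu N Ni I (N (k - 1) + Suc m) i) - real (Ni i (k - 1)) - rr N Ni i k * real (Suc m) < 1"
    proof (cases "i = j")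
      case True
      then show ?thesis unfolding e nuS using Dj unfolding D_def by simp
    next
      case False
      have "rr N Ni i k \<ge> 0" using rr_nonneg[OF i k] .
      moreover have "real (nu N Ni I n i) - real (Ni i (k - 1)) - rr N Ni i k * real m < 1" using IH i by blast
      ultimately show ?thesis unfolding e nuS using False unfolding prev_def
        by (simp add: algebra_simps)
    qed
  qed
qed

lemma ends: "\<forall>i\<in>{1..I}. nu N Ni I (N k) i = Ni i k"
proof (induction k)
  case 0 show ?case
  proof
    fix i assume "i \<in> {1..I}" then show "nu N Ni I (N 0) i = Ni i 0" by (simp add: N0 Ni0)
  qed
next
  case (Suc k)
  have lt: "N k < N (Suc k)" using smN by (simp add: strict_mono_def)
  have e: "N (Suc k - 1) + (N (Suc k) - N (Suc k - 1)) = N (Suc k)" using lt by simp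
  have B: "\<forall>i\<in>{1..I}. real (nu N Ni I (N (Suc k)) i) - real (Ni i k) - rr N Ni i (Suc k) * real (N (Suc k) - N k) < 1"
    using block[where k="Suc k" and m="N (Suc k) - N k"] Suc e by simp
  have le: "nu N Ni I (N (Suc k)) i \<le> Ni i (Suc k)" if i: "i \<in> {1..I}" for i
  proof -
    have "rr N Ni i (Suc k) * real (N (Suc k) - N k) = real (Ni i (Suc k)) - real (Ni i k)"
      unfolding rr_def using lt by (simp add: of_nat_diff)
    moreover have "real (nu N Ni I (N (Suc k)) i) - real (Ni i k) - rr N Ni i (Suc k) * real (N (Suc k) - N k) < 1"
      using B i by blast
    ultimately have "real (nu N Ni I (N (Suc k)) i) < real (Ni i (Suc k)) + 1" by linarith
    then show ?thesis by linarith
  qed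
  show ?case
  proof (rule ccontr)
    assume "\<not> ?case"
    then obtain i0 where i0: "i0 \<in> {1..I}" "nu N Ni I (N (Suc k)) i0 \<noteq> Ni i0 (Suc k)" by blast
    then have "nu N Ni I (N (Suc k)) i0 < Ni i0 (Suc k)" using le by fastforce
    then have "(\<Sum>i\<in>{1..I}. nu N Ni I (N (Suc k)) i) < (\<Sum>i\<in>{1..I}. Ni i (Suc k))"
      using le i0 by (intro sum_strict_mono_ex1) auto
    then show False using sum_nu sumN by simp
  qed
qed

lemma bound:
  assumes k: "k \<ge> 1" and n: "N (k - 1) \<le> n" "n \<le> N k" and i: "i \<in> {1..I}"
  shows "\<bar>real (nu N Ni I n i) - (real (Ni i (k - 1)) + rr N Ni i k * real (n - N (k - 1)))\<bar> \<le> real I"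
proof -
  define m where "m = n - N (k - 1)"
  have nm: "n = N (k - 1) + m" using n m_def by simp
  have mle: "m \<le> N k - N (k - 1)" using n m_def by simp
  have B: "\<forall>i\<in>{1..I}. real (nu N Ni I n i) - real (Ni i (k - 1)) - rr N Ni i k * real m < 1"
    using block[OF k ends[where k="k - 1"] mle] unfolding nm .
  define E where "E = (\<lambda>i. real (nu N Ni I n i) - real (Ni i (k - 1)) - rr N Ni i k * real m)"
  have sprev: "(\<Sum>i\<in>{1..I}. real (nu N Ni I n i)) = real n"
    by (metis of_nat_sum sum_nu)
  have sNi: "(\<Sum>i\<in>{1..I}. real (Ni i (k - 1))) = real (N (k - 1))"
    by (metis of_nat_sum sumN)
  have "(\<Sum>i\<in>{1..I}. E i) = (\<Sum>i\<in>{1..I}. real (nu N Ni I n i)) - (\<Sum>i\<in>{1..I}. real (Ni i (k - 1))) - real m * (\<Sum>i\<in>{1..I}. rr N Ni i k)"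
    unfolding E_def by (simp add: sum_subtractf sum_distrib_left mult.commute)
  also have "\<dots> = 0" using sprev sNi rr_sum[OF k] nm by simp
  finally have s0: "(\<Sum>i\<in>{1..I}. E i) = 0" .
  have "(\<Sum>i\<in>{1..I}. E i) = E i + (\<Sum>j\<in>{1..I} - {i}. E j)" using i by (simp add: sum.remove)
  moreover have "(\<Sum>j\<in>{1..I} - {i}. E j) \<le> of_nat (card ({1..I} - {i})) * 1"
    by (rule sum_bounded_above) (use B E_def in \<open>auto intro: less_imp_le\<close>)
  moreover have "card ({1..I} - {i}) \<le> I" using card_Diff1_le[of "{1..I}" i] by simp
  moreover have "real (card ({1..I} - {i})) \<le> real I" using calculation(3) by linarith
  ultimately have lo: "E i \<ge> - real I" using s0 by linarith
  have hi: "E i < 1" using B i unfolding E_def by blast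
  have I1r: "real I \<ge> 1" using I1 by simp
  have eq: "real (nu N Ni I n i) - (real (Ni i (k - 1)) + rr N Ni i k * real (n - N (k - 1))) = E i"
    unfolding E_def m_def by simp
  show ?thesis unfolding eq using lo hi I1r by linarith
qed


lemma mediant:
  assumes k: "k \<ge> 1" and n: "N (k - 1) < n" "n \<le> N k" and i: "i \<in> {1..I}"
  shows "\<bar>(real (Ni i (k - 1)) + rr N Ni i k * real (n - N (k - 1))) / real n - q\<bar>
         \<le> max \<bar>real (Ni i (k - 1)) / real (N (k - 1)) - q\<bar> \<bar>real (Ni i k) / real (N k) - q\<bar>"
proof -
  define a where "a = real (Ni i (k - 1))"
  define b where "b = real (Ni i k)"
  define A where "A = real (N (k - 1))"
  define B where "B = real (N k)"
  define t where "t = real (n - N (k - 1)) / (B - A)"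
  define e1 where "e1 = \<bar>a / A - q\<bar>"
  define e2 where "e2 = \<bar>b / B - q\<bar>"
  have BA: "B - A > 0" unfolding A_def B_def using N_pos_diff[OF k] .
  have mA: "real (n - N (k - 1)) = real n - A" unfolding A_def using n by (simp add: of_nat_diff)
  have t0: "t > 0" unfolding t_def using BA n by simp
  have t1: "t \<le> 1" unfolding t_def using BA n mA by (simp add: divide_le_eq B_def)
  have npos: "real n > 0" using n by simp
  have h: "t * (B - A) = real n - A" unfolding t_def mA using BA by simp
  have nt: "real n = (1 - t) * A + t * B"
  proof -
    have "(1 - t) * A + t * B = A + t * (B - A)" by (simp add: algebra_simps)
    also have "\<dots> = real n" using h by simp
    finally show ?thesis by simp
  qed
  have rt: "rr N Ni i k * real (n - N (k - 1)) = t * (b - a)"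
    unfolding rr_def t_def a_def b_def A_def B_def by simp
  have E: "a + rr N Ni i k * real (n - N (k - 1)) = (1 - t) * a + t * b"
    unfolding rt by (simp add: algebra_simps)
  have aA: "a \<le> A"
  proof -
    have "Ni i (k - 1) \<le> (\<Sum>j\<in>{1..I}. Ni j (k - 1))" using i by (intro member_le_sum) auto
    then show ?thesis unfolding a_def A_def sumN by simp
  qed
  have A0: "A \<ge> 0" unfolding A_def by simp
  have B0: "B > 0" using BA A0 by simp
  have d1: "\<bar>a - q * A\<bar> = A * e1"
  proof (cases "A = 0")
    case True then have "a = 0" using aA a_def by simp
    then show ?thesis using True by simp
  next
    case False
    then have "a - q * A = A * (a / A - q)" by (simp add: field_simps)
    then show ?thesis unfolding e1_def using A0 by (simp add: abs_mult)
  qed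
  have d2: "\<bar>b - q * B\<bar> = B * e2"
  proof -
    have "b - q * B = B * (b / B - q)" using B0 by (simp add: field_simps)
    then show ?thesis unfolding e2_def using B0 by (simp add: abs_mult)
  qed
  have "(1 - t) * a + t * b - q * real n = (1 - t) * (a - q * A) + t * (b - q * B)"
    unfolding nt by (simp add: algebra_simps)
  then have "\<bar>(1 - t) * a + t * b - q * real n\<bar> \<le> \<bar>(1 - t) * (a - q * A)\<bar> + \<bar>t * (b - q * B)\<bar>"
    by (simp only: abs_triangle_ineq)
  also have "\<dots> = (1 - t) * \<bar>a - q * A\<bar> + t * \<bar>b - q * B\<bar>"
    using t0 t1 by (simp add: abs_mult)
  also have "\<dots> = (1 - t) * A * e1 + t * B * e2" using d1 d2 by simp
  also have "\<dots> \<le> (1 - t) * A * max e1 e2 + t * B * max e1 e2"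
    using t0 t1 A0 B0 by (intro add_mono mult_left_mono) auto
  also have "\<dots> = real n * max e1 e2" unfolding nt by (simp add: algebra_simps)
  finally have fin: "\<bar>(1 - t) * a + t * b - q * real n\<bar> \<le> real n * max e1 e2" .
  have fin2: "\<bar>(1 - t) * a + t * b - q * real n\<bar> \<le> max e1 e2 * real n"
    using fin by (metis mult.commute)
  have eqq: "((1 - t) * a + t * b) / real n - q = ((1 - t) * a + t * b - q * real n) / real n"
  proof -
    have "q * real n / real n = q" using npos by simp
    then show ?thesis by (simp only: diff_divide_distrib)
  qed
  have "\<bar>((1 - t) * a + t * b) / real n - q\<bar> = \<bar>(1 - t) * a + t * b - q * real n\<bar> / real n"
    unfolding eqq by (rule abs_div_pos[OF npos, symmetric])
  also have "\<dots> \<le> max e1 e2" using fin2 by (simp only: pos_divide_le_eq[OF npos])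
  finally have "\<bar>((1 - t) * a + t * b) / real n - q\<bar> \<le> max e1 e2" .
  then have "\<bar>(a + rr N Ni i k * real (n - N (k - 1))) / real n - q\<bar> \<le> max e1 e2" by (simp only: E)
  then show ?thesis by (simp only: a_def b_def A_def B_def e1_def e2_def)
qed

lemma conv:
  assumes i: "i \<in> {1..I}" and lim: "(\<lambda>k. real (Ni i k) / real (N k)) \<longlonglongrightarrow> q"
  shows "(\<lambda>n. real (nu N Ni I n i) / real n) \<longlonglongrightarrow> q"
proof (rule LIMSEQ_I)
  fix r :: real assume r: "r > 0"
  obtain K where K: "\<And>k. k \<ge> K \<Longrightarrow> norm (real (Ni i k) / real (N k) - q) < r / 2"
    using LIMSEQ_D[OF lim, of "r / 2"] r by auto
  define no where "no = max (N K + 1) (nat \<lceil>2 * real I / r\<rceil> + 1)"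
  show "\<exists>no. \<forall>n\<ge>no. norm (real (nu N Ni I n i) / real n - q) < r"
  proof (intro exI allI impI)
    fix n assume nno: "n \<ge> no"
    then have n1: "n \<ge> 1" unfolding no_def by simp
    obtain k where k: "k \<ge> 1" "N (k - 1) < n" "n \<le> N k" using blk_ex[OF n1] by auto
    have kK: "k - 1 \<ge> K"
    proof (rule ccontr)
      assume "\<not> k - 1 \<ge> K" then have "k \<le> K" using k by arith
      then have "N k \<le> N K" using smN by (simp add: strict_mono_less_eq)
      then show False using k nno unfolding no_def by simp
    qed
    have e1: "\<bar>real (Ni i (k - 1)) / real (N (k - 1)) - q\<bar> < r / 2" using K[OF kK] by simp
    have e2: "\<bar>real (Ni i k) / real (N k) - q\<bar> < r / 2" using K[of k] kK by simp
    define E where "E = real (Ni i (k - 1)) + rr N Ni i k * real (n - N (k - 1))"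
    have mx: "max \<bar>real (Ni i (k - 1)) / real (N (k - 1)) - q\<bar> \<bar>real (Ni i k) / real (N k) - q\<bar> < r / 2"
      using e1 e2 by simp
    have M: "\<bar>E / real n - q\<bar> < r / 2" using mediant[OF k i, of q] mx unfolding E_def by linarith
    have Bd: "\<bar>real (nu N Ni I n i) - E\<bar> \<le> real I" unfolding E_def using bound[OF k(1) _ k(3) i] k(2) by simp
    have npos: "real n > 0" using n1 by simp
    have "real n \<ge> real (nat \<lceil>2 * real I / r\<rceil> + 1)" using nno unfolding no_def by simp
    then have "real n > 2 * real I / r" by linarith
    then have nI: "real I / real n < r / 2" using r npos by (simp add: field_simps)
    have h1: "\<bar>(real (nu N Ni I n i) - E) / real n\<bar> \<le> real I / real n"
      using Bd npos by (simp add: divide_right_mono)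
    have eq: "real (nu N Ni I n i) / real n - q = (real (nu N Ni I n i) - E) / real n + (E / real n - q)"
      using npos by (simp add: diff_divide_distrib)
    have T: "\<bar>(real (nu N Ni I n i) - E) / real n + (E / real n - q)\<bar> \<le> \<bar>(real (nu N Ni I n i) - E) / real n\<bar> + \<bar>E / real n - q\<bar>"
      by (rule abs_triangle_ineq)
    show "norm (real (nu N Ni I n i) / real n - q) < r" unfolding real_norm_def eq
      using T h1 M nI by linarith
  qed
qed

end

theorem lemma2p6:
  fixes I :: nat and N :: "nat \<Rightarrow> nat" and Ni :: "nat \<Rightarrow> nat \<Rightarrow> nat" and q :: "nat \<Rightarrow> real"
  assumes "I \<ge> 1"
    and "N 0 = 0" and "strict_mono N"
    and "\<And>i. i \<in> {1..I} \<Longrightarrow> Ni i 0 = 0"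
    and "\<And>i k. i \<in> {1..I} \<Longrightarrow> k \<ge> 1 \<Longrightarrow> Ni i k \<ge> Ni i (k - 1)"
    and "\<And>k. (\<Sum>i\<in>{1..I}. Ni i k) = N k"
    and "\<And>i. i \<in> {1..I} \<Longrightarrow> (\<lambda>k. real (Ni i k) / real (N k)) \<longlonglongrightarrow> q i"
  shows "\<forall>i\<in>{1..I}. (\<lambda>n. real (nu N Ni I n i) / real n) \<longlonglongrightarrow> q i"
  using conv[OF assms(1-6)] assms(7) by blast

end
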